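(* Let $\mathcal{U}_{w,F}$ be a folded ribbon $3$-stick unknot with ribbon linking number $\operatorname{Lk}(\mathcal{U}_{w,F})=\pm1$, and assume $\operatorname{Len}(\mathcal{U})=1$. Then the ribbon width satisfies $w\le \frac{1}{\sqrt3}$, and the width achieves its maximum value $\frac1{\sqrt3}$ when $\mathcal{U}$ is an equilateral triangle.
   Context: A folded ribbon $3$-stick unknot corresponds to an unknot diagram $\mathcal{U}$ with three edges forming a non-degenerate triangle. For width $w>0$, $\mathcal{U}_{w,F}$ is a flat strip of width $w$ centred on $\mathcal{U}$ (boundary parallel to and at distance $w/2$ from each edge), folded at each vertex along a fold line through the vertex perpendicular to the bisector of the angle there; it is a piecewise-linear immersion of a Möbius band into the plane whose only singularities are the pairwise disjoint fold lines (this constrains how large $w$ can be for a given triangle); the folding information $F$ records which layer lies on top at each fold. The ribbon linking number $\operatorname{Lk}(\mathcal{U}_{w,F})$ is one half the sum of the signs (right-hand rule) of the crossings between the oriented diagram and the ribbon's boundary curve. Linking number $\pm1$ corresponds to one of the three folds being of a different over/under type from the other two. *)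

theory Defs
  imports "HOL-Analysis.Analysis"
begin

text \<open>A 3-stick unknot diagram: vertices P 0, P 1, P 2 of a triangle in the plane
  (indices read modulo 3); edge i runs from vertex i to vertex i+1.\<close>

type_synonym point = "real^2"

definition vtx :: "(nat \<Rightarrow> point) \<Rightarrow> nat \<Rightarrow> point" where
  "vtx P i = P (i mod 3)"

definition nondegenerate_triangle :: "(nat \<Rightarrow> point) \<Rightarrow> bool" where
  "nondegenerate_triangle P \<longleftrightarrow> \<not> collinear {P 0, P 1, P 2}"

definition Len :: "(nat \<Rightarrow> point) \<Rightarrow> real" where
  "Len P = dist (P 0) (P 1) + dist (P 1) (P 2) + dist (P 2) (P 0)"

definition equilateral :: "(nat \<Rightarrow> point) \<Rightarrow> bool" where
  "equilateral P \<longleftrightarrow> dist (P 0) (P 1) = dist (P 1) (P 2) \<and> dist (P 1) (P 2) = dist (P 2) (P 0)"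

definition bisector_dir :: "(nat \<Rightarrow> point) \<Rightarrow> nat \<Rightarrow> point" where
  "bisector_dir P i = sgn (vtx P (i + 2) - vtx P i) + sgn (vtx P (i + 1) - vtx P i)"

definition fold_line :: "(nat \<Rightarrow> point) \<Rightarrow> nat \<Rightarrow> point set" where
  "fold_line P i = {x. inner (x - vtx P i) (bisector_dir P i) = 0}"

text \<open>The part of the fold line at vertex i lying in the (interior of the) ribbon of width w:
  points of the fold line at distance less than w/2 from the line of the incoming edge
  (equivalently, of the outgoing edge).\<close>
definition fold_segment :: "(nat \<Rightarrow> point) \<Rightarrow> real \<Rightarrow> nat \<Rightarrow> point set" where
  "fold_segment P w i =
     fold_line P i \<inter> {x. infdist x (affine hull {vtx P (i + 2), vtx P i}) < w / 2}"

text \<open>Folding information F: F i says which layer lies on top at the fold at vertex i.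
  Each fold contributes +1 or -1 to the ribbon linking number according to its type
  (the two crossings at a fold each contribute half of that, after the factor 1/2).\<close>
definition ribbon_Lk :: "(nat \<Rightarrow> bool) \<Rightarrow> int" where
  "ribbon_Lk F = (\<Sum>i<3. if F i then 1 else -1)"

definition folded_ribbon_3stick :: "(nat \<Rightarrow> point) \<Rightarrow> real \<Rightarrow> (nat \<Rightarrow> bool) \<Rightarrow> bool" where
  "folded_ribbon_3stick P w F \<longleftrightarrow>
     nondegenerate_triangle P \<and> w > 0 \<and>
     (\<forall>i<3. \<forall>j<3. i \<noteq> j \<longrightarrow> fold_segment P w i \<inter> fold_segment P w j = {})"

end

theory Submission imports Defs begin
lemma core_alg:
  fixes a b c :: real
  assumes "a+b+c = 1" "c \<le> a" "c \<le> b" "c < a + b" "a < b + c" "b < a + c" "c>0"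
  shows "(a-b+c)*(b+c-a)*(a+b+c)/(4*(a+b-c)) \<le> 1/12"
proof -
  have 1: "(a-b+c)*(b+c-a) \<le> c^2"
  proof -
    have "0 \<le> (a - b)^2" by simp
    then show ?thesis by (simp add: power2_eq_square algebra_simps)
  qed
  have "(3*c-1)*(c+1) \<le> 0" using assms by (intro mult_nonpos_nonneg) auto
  then have "3*c^2 \<le> a+b-c" using assms by (simp add: power2_eq_square algebra_simps)
  then have "3*(a-b+c)*(b+c-a) \<le> (a+b-c)" using 1 by linarith
  then have 3: "3*((a-b+c)*(b+c-a)) \<le> (a+b-c)" by (simp add: algebra_simps)
  have "a+b-c > 0" using assms by linarith
  then show ?thesis using 3 assms(1) by (simp add: pos_divide_le_eq)
qed

lemma line_dist:
  fixes A u z :: "'a::real_inner"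
  assumes "inner u u = c^2" "c > 0"
  shows "(dist (A + z) (A + (inner z u / c^2) *\<^sub>R u))^2 = inner z z - (inner z u)^2 / c^2"
proof -
  have "(dist (A + z) (A + (inner z u / c^2) *\<^sub>R u))^2 = inner (z - (inner z u / c^2) *\<^sub>R u) (z - (inner z u / c^2) *\<^sub>R u)"
    by (simp add: dist_norm power2_norm_eq_inner algebra_simps)
  also have "\<dots> = inner z z - 2 * (inner z u / c^2) * inner z u + (inner z u / c^2)^2 * inner u u"
    by (simp add: inner_simps inner_commute power2_eq_square algebra_simps)
  also have "\<dots> = inner z z - (inner z u)^2 / c^2" using assms by (simp add: field_simps power2_eq_square)
  finally show ?thesis .
qed

lemma part1_core:
  fixes A B C :: "'a::real_inner"
  assumes ad: "a = dist B C" and bd: "b = dist C A" and cd: "c = dist A B"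
    and pos: "a > 0" "b > 0" "c > 0" and tri: "c < a + b" "a < b + c" "b < a + c"
    and sum: "a+b+c = 1" and mn: "c \<le> a" "c \<le> b" and w: "w > 1 / sqrt 3"
  shows "\<exists>X. inner (X - A) (sgn (C - A) + sgn (B - A)) = 0 \<and> infdist X (affine hull {C, A}) < w/2
           \<and> inner (X - B) (sgn (A - B) + sgn (C - B)) = 0 \<and> infdist X (affine hull {A, B}) < w/2"
proof -
  define u where "u = B - A"
  define v where "v = C - A"
  define p where "p = inner u v"
  have cn: "c = norm u" using cd by (simp add: u_def dist_norm norm_minus_commute)
  have bn: "b = norm v" using bd by (simp add: v_def dist_norm norm_minus_commute)
  have CB: "C - B = v - u" by (simp add: u_def v_def)
  have an: "a = norm (v - u)" using ad CB by (metis dist_norm dist_commute)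
  have uu: "inner u u = c^2" using cn by (simp add: power2_norm_eq_inner)
  have vv: "inner v v = b^2" using bn by (simp add: power2_norm_eq_inner)
  have "a^2 = inner (v - u) (v - u)" using an by (simp add: power2_norm_eq_inner)
  then have law: "a^2 = b^2 + c^2 - 2*p" using uu vv by (simp add: inner_simps inner_commute p_def)
  then have pv: "p = (b^2 + c^2 - a^2)/2" by simp
  define D where "D = a + b - c"
  have Dpos: "D > 0" using tri by (simp add: D_def)
  define z where "z = (1/D) *\<^sub>R (b *\<^sub>R u - c *\<^sub>R v)"
  have zu: "inner z u = (b*c^2 - c*p)/D" using uu
    by (simp add: z_def inner_simps p_def inner_commute)
  have zv: "inner z v = (b*p - c*b^2)/D" using vv
    by (simp add: z_def inner_simps p_def inner_commute)
  have zz: "inner z z = 2*b*c*(b*c-p)/D^2" using uu vv Dpos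
    by (simp add: z_def inner_simps p_def inner_commute power2_eq_square field_simps)
  define X where "X = A + z"
  have sA: "sgn (C - A) + sgn (B - A) = (1/b) *\<^sub>R v + (1/c) *\<^sub>R u"
    using bd cd by (simp add: sgn_div_norm u_def v_def dist_norm norm_minus_commute divide_inverse_commute scaleR_conv_of_real)
  have foldA: "inner (X - A) (sgn (C - A) + sgn (B - A)) = 0"
  proof -
    have "inner (X - A) (sgn (C - A) + sgn (B - A)) = inner z v / b + inner z u / c"
      unfolding sA X_def by (simp add: inner_simps)
    also have "\<dots> = 0" unfolding zu zv using pos Dpos by (simp add: field_simps power2_eq_square)
    finally show ?thesis .
  qed
  have sB: "sgn (A - B) + sgn (C - B) = (-1/c) *\<^sub>R u + (1/a) *\<^sub>R (v - u)"
  proof -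
    have "A - B = - u" by (simp add: u_def)
    then show ?thesis using CB cn an by (simp add: sgn_minus sgn_div_norm divide_inverse_commute)
  qed
  have foldB: "inner (X - B) (sgn (A - B) + sgn (C - B)) = 0"
  proof -
    have XB: "X - B = z - u" by (simp add: X_def u_def)
    have "inner (X - B) (sgn (A - B) + sgn (C - B)) = -(inner z u - c^2)/c + (inner z v - inner z u - p + c^2)/a"
      unfolding sB XB using uu pos by (simp add: inner_simps inner_commute p_def field_simps)
    also have "\<dots> = (p + a*c - c^2)/D + (p*(2*c-a) - b^2*c + a*c^2 - c^3)/(a*D)"
      unfolding zu zv using pos Dpos by (simp add: field_simps) (simp add: D_def algebra_simps power2_eq_square power3_eq_cube)
    also have "\<dots> = c*(a^2 + 2*p - b^2 - c^2)/(a*D)"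
      using pos Dpos by (simp add: field_simps) (simp add: algebra_simps power2_eq_square power3_eq_cube)
    also have "\<dots> = 0" using law by simp
    finally show ?thesis .
  qed
  define R where "R = (a-b+c)*(b+c-a)*(a+b+c)/(4*(a+b-c))"
  have K: "b^2*c^2 - p^2 = (a-b+c)*D*(b+c-a)*(a+b+c)/4"
    unfolding pv D_def by (simp add: field_simps power2_eq_square)
  have K2: "(b^2*c^2 - p^2)/D^2 = R"
    unfolding K R_def D_def[symmetric] using Dpos by (simp add: field_simps power2_eq_square)
  have R1: "inner z z - (inner z u)^2 / c^2 = R"
  proof -
    have "inner z z - (inner z u)^2 / c^2 = (b^2*c^2 - p^2)/D^2"
      unfolding zz zu using pos Dpos by (simp add: field_simps power2_eq_square)
    then show ?thesis using K2 by simp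
  qed
  have R2: "inner z z - (inner z v)^2 / b^2 = R"
  proof -
    have "inner z z - (inner z v)^2 / b^2 = (b^2*c^2 - p^2)/D^2"
      unfolding zz zv using pos Dpos by (simp add: field_simps power2_eq_square)
    then show ?thesis using K2 by simp
  qed
  have R3: "R \<le> 1/12" unfolding R_def by (rule core_alg) (use sum mn tri pos in auto)
  have wpos: "w > 0" using w by (smt (verit) divide_pos_pos real_sqrt_gt_0_iff)
  have s3: "sqrt 3 > 0" by simp
  have g1: "1 < sqrt 3 * w" using w s3 by (simp add: divide_less_eq mult.commute)
  have "1 < (sqrt 3 * w) * (sqrt 3 * w)" using less_1_mult[OF g1 g1] .
  then have "1 < 3 * w^2" by (simp add: power2_eq_square algebra_simps)
  then have w2: "1/3 < w^2" by simp
  have lt: "R < (w/2)^2" using R3 w2 by (simp add: power_divide)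
  have d1: "dist X (A + (inner z u / c^2) *\<^sub>R u) < w/2"
    using line_dist[OF uu pos(3), of A z] R1 lt wpos X_def
    by (metis half_gt_zero less_le power2_less_imp_less)
  have d2: "dist X (A + (inner z v / b^2) *\<^sub>R v) < w/2"
    using line_dist[OF vv pos(2), of A z] R2 lt wpos X_def
    by (metis half_gt_zero less_le power2_less_imp_less)
  have m1: "A + (inner z u / c^2) *\<^sub>R u \<in> affine hull {A, B}"
    unfolding affine_hull_2_alt u_def by (rule rangeI)
  have m2: "A + (inner z v / b^2) *\<^sub>R v \<in> affine hull {C, A}"
    unfolding insert_commute[of C A] affine_hull_2_alt v_def by (rule rangeI)
  show ?thesis
    by (rule exI[of _ X]) (use foldA foldB infdist_le2[OF m1 less_imp_le[OF d1]] infdist_le2[OF m2 less_imp_le[OF d2]]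
        infdist_le[OF m1, of X] infdist_le[OF m2, of X] d1 d2 in auto)
qed

lemma part2_core:
  fixes A B C X :: "'a::real_inner"
  assumes d: "dist A B = L" "dist B C = L" "dist C A = L" and L: "L > 0" and w: "w/2 = sqrt 3 / 2 * L"
    and fA: "inner (X - A) (sgn (C - A) + sgn (B - A)) = 0"
    and fB: "inner (X - B) (sgn (A - B) + sgn (C - B)) = 0"
    and dB: "infdist X (affine hull {A, B}) < w/2"
  shows False
proof -
  define u where "u = B - A"
  define v where "v = C - A"
  define z where "z = X - A"
  have cn: "L = norm u" using d by (simp add: u_def dist_norm norm_minus_commute)
  have bn: "L = norm v" using d by (simp add: v_def dist_norm norm_minus_commute)
  have CB: "C - B = v - u" by (simp add: u_def v_def)
  have an: "L = norm (v - u)" using d CB by (metis dist_norm dist_commute)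
  have uu: "inner u u = L^2" using cn by (simp add: power2_norm_eq_inner)
  have vv: "inner v v = L^2" using bn by (simp add: power2_norm_eq_inner)
  have "L^2 = inner (v - u) (v - u)" using an by (simp add: power2_norm_eq_inner)
  then have uv: "inner u v = L^2/2" using uu vv by (simp add: inner_simps inner_commute)
  have sA: "sgn (C - A) + sgn (B - A) = (1/L) *\<^sub>R (v + u)"
    using bn cn by (simp add: sgn_div_norm u_def v_def divide_inverse_commute scaleR_add_right)
  have sB: "sgn (A - B) + sgn (C - B) = (- u) /\<^sub>R L + (v - u) /\<^sub>R L"
  proof -
    have AB: "A - B = - u" by (simp add: u_def)
    have "sgn (A - B) + sgn (C - B) = sgn (- u) + sgn (v - u)" unfolding AB CB ..
    also have "\<dots> = (- u) /\<^sub>R L + (v - u) /\<^sub>R L" unfolding sgn_div_norm norm_minus_cancel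
      by (simp only: cn[symmetric] an[symmetric])
    finally show ?thesis .
  qed
  have e1: "inner z v + inner z u = 0" using fA L unfolding sA z_def[symmetric] by (simp add: inner_simps)
  have XB: "X - B = z - u" by (simp add: z_def u_def)
  have e2: "inner z v - 2 * inner z u - inner u v + 2 * inner u u = 0"
    using fB L unfolding sB XB by (simp add: inner_simps inner_commute)
  have zu: "inner z u = L^2/2" using e1 e2 uu uv by simp
  have zv: "inner z v = -(L^2/2)" using e1 zu by simp
  define n where "n = v - (1/2) *\<^sub>R u"
  have nu: "inner u n = 0" using uu uv by (simp add: n_def inner_simps)
  have nn: "inner n n = 3/4 * L^2" using uu uv vv by (simp add: n_def inner_simps inner_commute)
  have zn: "inner z n = -(3/4 * L^2)" using zu zv by (simp add: n_def inner_simps)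
  have lb: "w/2 \<le> dist X y" if y: "y \<in> affine hull {A, B}" for y
  proof -
    obtain t where t: "y = A + t *\<^sub>R u" using y unfolding affine_hull_2_alt u_def by auto
    have "X - y = z - t *\<^sub>R u" by (simp add: t z_def)
    then have i: "inner (X - y) n = -(3/4 * L^2)" using zn nu by (simp add: inner_simps)
    have cs: "(inner (X - y) n)^2 \<le> inner (X - y) (X - y) * inner n n" by (rule Cauchy_Schwarz_ineq)
    have "(3/4 * L^2)^2 \<le> (dist X y)^2 * (3/4 * L^2)"
      using cs unfolding i nn by (simp add: dist_norm power2_norm_eq_inner)
    then have "3/4 * L^2 \<le> (dist X y)^2" using L by (simp add: power2_eq_square)
    moreover have "(w/2)^2 = 3/4 * L^2" unfolding w by (simp add: power_mult_distrib power_divide)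
    ultimately have "(w/2)^2 \<le> (dist X y)^2" by simp
    then show ?thesis by (rule power2_le_imp_le) simp
  qed
  have ne: "affine hull {A, B} \<noteq> {}" using hull_subset[of "{A,B}" affine] by auto
  have "w/2 \<le> infdist X (affine hull {A, B})"
    unfolding infdist_notempty[OF ne]
    by (rule cINF_greatest) (use lb in auto)
  then show False using dB by simp
qed

lemma seg_eq: "fold_segment P w i = {x. inner (x - vtx P i) (sgn (vtx P (i+2) - vtx P i) + sgn (vtx P (i+1) - vtx P i)) = 0
   \<and> infdist x (affine hull {vtx P (i+2), vtx P i}) < w/2}"
  unfolding fold_segment_def fold_line_def bisector_dir_def by (simp add: Collect_conj_eq add.commute)

lemma vtx_vals: "vtx P 0 = P 0" "vtx P 1 = P 1" "vtx P 2 = P 2" "vtx P (0+2) = P 2" "vtx P (0+1) = P 1"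
  "vtx P (1+2) = P 0" "vtx P (1+1) = P 2" "vtx P (2+2) = P 1" "vtx P (2+1) = P 0"
  unfolding vtx_def by (simp_all add: numeral_2_eq_2)

lemma seg0: "fold_segment P w 0 = {x. inner (x - P 0) (sgn (P 2 - P 0) + sgn (P 1 - P 0)) = 0
   \<and> infdist x (affine hull {P 2, P 0}) < w/2}"
  by (simp only: seg_eq vtx_vals)
lemma seg1: "fold_segment P w 1 = {x. inner (x - P 1) (sgn (P 0 - P 1) + sgn (P 2 - P 1)) = 0
   \<and> infdist x (affine hull {P 0, P 1}) < w/2}"
  by (simp only: seg_eq vtx_vals)
lemma seg2: "fold_segment P w 2 = {x. inner (x - P 2) (sgn (P 1 - P 2) + sgn (P 0 - P 2)) = 0
   \<and> infdist x (affine hull {P 1, P 2}) < w/2}"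
  by (simp only: seg_eq vtx_vals)

lemma noncol_tri:
  fixes A B C :: "'a::euclidean_space"
  assumes "\<not> collinear {A, B, C}"
  shows "dist A B < dist A C + dist C B"
proof -
  have "dist A B \<noteq> dist A C + dist C B"
  proof
    assume "dist A B = dist A C + dist C B"
    then have "between (A, B) C" by (simp add: between)
    then have "collinear {A, B, C}" unfolding collinear_between_cases by blast
    then show False using assms by contradiction
  qed
  moreover have "dist A B \<le> dist A C + dist C B" by (rule dist_triangle)
  ultimately show ?thesis by simp
qed

lemma noncol_pos:
  fixes A B C :: "'a::euclidean_space"
  assumes "\<not> collinear {A, B, C}"
  shows "dist A B > 0"
proof -
  have "A \<noteq> B" using assms by (auto simp: collinear_2)
  then show ?thesis by simp
qed

theorem theorem5p5:
  shows "(\<forall>P w F. folded_ribbon_3stick P w F \<and> \<bar>ribbon_Lk F\<bar> = 1 \<and> Len P = 1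
            \<longrightarrow> w \<le> 1 / sqrt 3) \<and>
         (\<forall>P F. equilateral P \<and> Len P = 1 \<and> \<bar>ribbon_Lk F\<bar> = 1
            \<longrightarrow> folded_ribbon_3stick P (1 / sqrt 3) F)"
proof (intro conjI allI impI)
  fix P w F
  assume h: "folded_ribbon_3stick P w F \<and> \<bar>ribbon_Lk F\<bar> = 1 \<and> Len P = 1"
  have nc: "\<not> collinear {P 0, P 1, P 2}" using h by (simp add: folded_ribbon_3stick_def nondegenerate_triangle_def)
  have disj: "\<And>i j. i < 3 \<Longrightarrow> j < 3 \<Longrightarrow> i \<noteq> j \<Longrightarrow> fold_segment P w i \<inter> fold_segment P w j = {}"
    using h unfolding folded_ribbon_3stick_def by simp
  define d01 where "d01 = dist (P 0) (P 1)"
  define d12 where "d12 = dist (P 1) (P 2)"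
  define d20 where "d20 = dist (P 2) (P 0)"
  have sum: "d01 + d12 + d20 = 1" using h by (simp add: Len_def d01_def d12_def d20_def)
  have "{P 1, P 2, P 0} = {P 0, P 1, P 2}" by blast
  then have nc2: "\<not> collinear {P 1, P 2, P 0}" using nc by simp
  have "{P 2, P 0, P 1} = {P 0, P 1, P 2}" by blast
  then have nc3: "\<not> collinear {P 2, P 0, P 1}" using nc by simp
  have t1: "d01 < d12 + d20" using noncol_tri[OF nc] by (simp add: d01_def d12_def d20_def dist_commute)
  have t2: "d12 < d20 + d01" using noncol_tri[OF nc2] by (simp add: d01_def d12_def d20_def dist_commute)
  have t3: "d20 < d01 + d12" using noncol_tri[OF nc3] by (simp add: d01_def d12_def d20_def dist_commute)
  have p1: "d01 > 0" using noncol_pos[OF nc] by (simp add: d01_def)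
  have p2: "d12 > 0" using noncol_pos[OF nc2] by (simp add: d12_def)
  have p3: "d20 > 0" using noncol_pos[OF nc3] by (simp add: d20_def)
  show "w \<le> 1 / sqrt 3"
  proof (rule ccontr)
    assume "\<not> w \<le> 1 / sqrt 3"
    then have w: "w > 1 / sqrt 3" by simp
    consider "d01 \<le> d12 \<and> d01 \<le> d20" | "d12 \<le> d01 \<and> d12 \<le> d20" | "d20 \<le> d01 \<and> d20 \<le> d12" by linarith
    then show False
    proof cases
      case 1
      have ex: "\<exists>X. inner (X - P 0) (sgn (P 2 - P 0) + sgn (P 1 - P 0)) = 0 \<and> infdist X (affine hull {P 2, P 0}) < w/2
           \<and> inner (X - P 1) (sgn (P 0 - P 1) + sgn (P 2 - P 1)) = 0 \<and> infdist X (affine hull {P 0, P 1}) < w/2"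
        by (rule part1_core[OF d12_def d20_def d01_def]) (use p1 p2 p3 t1 t2 t3 sum 1 w in linarith)+
      then obtain X where X: "inner (X - P 0) (sgn (P 2 - P 0) + sgn (P 1 - P 0)) = 0 \<and> infdist X (affine hull {P 2, P 0}) < w/2
           \<and> inner (X - P 1) (sgn (P 0 - P 1) + sgn (P 2 - P 1)) = 0 \<and> infdist X (affine hull {P 0, P 1}) < w/2" by blast
      then have "X \<in> fold_segment P w 0 \<inter> fold_segment P w 1" unfolding seg0 seg1 by simp
      moreover have "fold_segment P w 0 \<inter> fold_segment P w 1 = {}" by (rule disj) auto
      ultimately show False by blast
    next
      case 2
      have ex: "\<exists>X. inner (X - P 1) (sgn (P 0 - P 1) + sgn (P 2 - P 1)) = 0 \<and> infdist X (affine hull {P 0, P 1}) < w/2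
           \<and> inner (X - P 2) (sgn (P 1 - P 2) + sgn (P 0 - P 2)) = 0 \<and> infdist X (affine hull {P 1, P 2}) < w/2"
        by (rule part1_core[OF d20_def d01_def d12_def]) (use p1 p2 p3 t1 t2 t3 sum 2 w in linarith)+
      then obtain X where X: "inner (X - P 1) (sgn (P 0 - P 1) + sgn (P 2 - P 1)) = 0 \<and> infdist X (affine hull {P 0, P 1}) < w/2
           \<and> inner (X - P 2) (sgn (P 1 - P 2) + sgn (P 0 - P 2)) = 0 \<and> infdist X (affine hull {P 1, P 2}) < w/2" by blast
      then have "X \<in> fold_segment P w 1 \<inter> fold_segment P w 2" unfolding seg1 seg2 by simp
      moreover have "fold_segment P w 1 \<inter> fold_segment P w 2 = {}" by (rule disj) auto
      ultimately show False by blast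
    next
      case 3
      have ex: "\<exists>X. inner (X - P 2) (sgn (P 1 - P 2) + sgn (P 0 - P 2)) = 0 \<and> infdist X (affine hull {P 1, P 2}) < w/2
           \<and> inner (X - P 0) (sgn (P 2 - P 0) + sgn (P 1 - P 0)) = 0 \<and> infdist X (affine hull {P 2, P 0}) < w/2"
        by (rule part1_core[OF d01_def d12_def d20_def]) (use p1 p2 p3 t1 t2 t3 sum 3 w in linarith)+
      then obtain X where X: "inner (X - P 2) (sgn (P 1 - P 2) + sgn (P 0 - P 2)) = 0 \<and> infdist X (affine hull {P 1, P 2}) < w/2
           \<and> inner (X - P 0) (sgn (P 2 - P 0) + sgn (P 1 - P 0)) = 0 \<and> infdist X (affine hull {P 2, P 0}) < w/2" by blast
      then have "X \<in> fold_segment P w 2 \<inter> fold_segment P w 0" unfolding seg2 seg0 by simp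
      moreover have "fold_segment P w 2 \<inter> fold_segment P w 0 = {}" by (rule disj) auto
      ultimately show False by blast
    qed
  qed
next
  fix P F
  assume h: "equilateral P \<and> Len P = 1 \<and> \<bar>ribbon_Lk F\<bar> = 1"
  define L :: real where "L = 1/3"
  have d: "dist (P 0) (P 1) = L" "dist (P 1) (P 2) = L" "dist (P 2) (P 0) = L"
    using h by (auto simp: equilateral_def Len_def L_def)
  have L: "L > 0" by (simp add: L_def)
  define w :: real where "w = 1 / sqrt 3"
  have w: "w/2 = sqrt 3 / 2 * L"
  proof -
    have "sqrt 3 * sqrt 3 = (3::real)" by simp
    then show ?thesis by (simp add: w_def L_def field_simps)
  qed
  have wpos: "w > 0" by (simp add: w_def)
  have nc: "\<not> collinear {P 0, P 1, P 2}"
  proof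
    assume "collinear {P 0, P 1, P 2}"
    then have "between (P 1, P 2) (P 0) \<or> between (P 2, P 0) (P 1) \<or> between (P 0, P 1) (P 2)"
      by (simp add: collinear_between_cases)
    then show False using d L by (auto simp: between dist_commute)
  qed
  have e01: "fold_segment P w 0 \<inter> fold_segment P w 1 = {}"
  proof (rule ccontr)
    assume "fold_segment P w 0 \<inter> fold_segment P w 1 \<noteq> {}"
    then obtain X where "X \<in> fold_segment P w 0" "X \<in> fold_segment P w 1" by blast
    then have "X \<in> fold_segment P w 0" "X \<in> fold_segment P w 1" .
    then have Xa: "inner (X - P 0) (sgn (P 2 - P 0) + sgn (P 1 - P 0)) = 0" and Xb: "inner (X - P 1) (sgn (P 0 - P 1) + sgn (P 2 - P 1)) = 0 \<and> infdist X (affine hull {P 0, P 1}) < w/2"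
      unfolding seg0 seg1 by auto
    show False using part2_core[where A="P 0" and B="P 1" and C="P 2" and L=L and w=w and X=X, OF d(1) d(2) d(3) L w] Xa Xb by blast
  qed
  have e12: "fold_segment P w 1 \<inter> fold_segment P w 2 = {}"
  proof (rule ccontr)
    assume "fold_segment P w 1 \<inter> fold_segment P w 2 \<noteq> {}"
    then obtain X where "X \<in> fold_segment P w 1" "X \<in> fold_segment P w 2" by blast
    then have "X \<in> fold_segment P w 1" "X \<in> fold_segment P w 2" .
    then have Xa: "inner (X - P 1) (sgn (P 0 - P 1) + sgn (P 2 - P 1)) = 0" and Xb: "inner (X - P 2) (sgn (P 1 - P 2) + sgn (P 0 - P 2)) = 0 \<and> infdist X (affine hull {P 1, P 2}) < w/2"
      unfolding seg1 seg2 by auto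
    show False using part2_core[where A="P 1" and B="P 2" and C="P 0" and L=L and w=w and X=X, OF d(2) d(3) d(1) L w] Xa Xb by blast
  qed
  have e20: "fold_segment P w 2 \<inter> fold_segment P w 0 = {}"
  proof (rule ccontr)
    assume "fold_segment P w 2 \<inter> fold_segment P w 0 \<noteq> {}"
    then obtain X where "X \<in> fold_segment P w 2" "X \<in> fold_segment P w 0" by blast
    then have "X \<in> fold_segment P w 2" "X \<in> fold_segment P w 0" .
    then have Xa: "inner (X - P 2) (sgn (P 1 - P 2) + sgn (P 0 - P 2)) = 0" and Xb: "inner (X - P 0) (sgn (P 2 - P 0) + sgn (P 1 - P 0)) = 0 \<and> infdist X (affine hull {P 2, P 0}) < w/2"
      unfolding seg2 seg0 by auto
    show False using part2_core[where A="P 2" and B="P 0" and C="P 1" and L=L and w=w and X=X, OF d(3) d(1) d(2) L w] Xa Xb by blast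
  qed
  have "\<forall>i<3. \<forall>j<3. i \<noteq> j \<longrightarrow> fold_segment P w i \<inter> fold_segment P w j = {}"
  proof (intro allI impI)
    fix i j :: nat assume "i < 3" "j < 3" "i \<noteq> j"
    then have "(i = 0 \<and> j = 1) \<or> (i = 1 \<and> j = 0) \<or> (i = 1 \<and> j = 2) \<or> (i = 2 \<and> j = 1) \<or> (i = 2 \<and> j = 0) \<or> (i = 0 \<and> j = 2)"
      by auto
    then show "fold_segment P w i \<inter> fold_segment P w j = {}" using e01 e12 e20 by (auto simp: Int_commute)
  qed
  then show "folded_ribbon_3stick P (1 / sqrt 3) F"
    using nc wpos by (simp add: folded_ribbon_3stick_def nondegenerate_triangle_def w_def)
qed

end
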